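(* Let $h(w)=\sum_{s\in\mathcal S}\pi_s\,\frac{\phi_s^\top w-V_s}{\|\phi_s\|_2^2}\,\phi_s$ be the function tracked asymptotically by the Normalized Monte Carlo update $w_{k+1}=w_k-\alpha_k TP_k(w_k)$. Then the unique globally asymptotically stable equilibrium of the limiting ODE $\dot w(t)=-h(w(t))$ is $w^M=\big[(\Phi^\top NDN\Phi)^{-1}\Phi^\top NDN\big]V$.
   Context: $\mathcal S=\{1,\dots,m\}$ is the state space of an ergodic Markov chain with stationary distribution $\pi$, $D=\mathrm{diag}(\pi)$; $V\in\mathbb R^m$ is the value function; $\phi_s\in\mathbb R^n$ are nonzero features and $\Phi\in\mathbb R^{m\times n}$ (rows $\phi_s^\top$) has full column rank; $N$ is diagonal with $N_{(s,s)}=1/\|\phi_s\|_2$. $TP_k$ is the sampled normalized update $\frac1\tau\sum_{i=1}^\tau\frac{\phi_i^\top w-\widetilde V_i}{\|\phi_i\|^2}\phi_i$ over the distinct states of a sampled trajectory, whose conditional expectation is $h$. *)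

theory Defs
  imports "HOL-Analysis.Analysis"
begin

definition stochastic :: "('s::finite \<Rightarrow> 's \<Rightarrow> real) \<Rightarrow> bool" where
  "stochastic P \<longleftrightarrow> (\<forall>s t. P s t \<ge> 0) \<and> (\<forall>s. (\<Sum>t\<in>UNIV. P s t) = 1)"

fun nstep :: "('s::finite \<Rightarrow> 's \<Rightarrow> real) \<Rightarrow> nat \<Rightarrow> 's \<Rightarrow> 's \<Rightarrow> real" where
  "nstep P 0 s t = (if s = t then 1 else 0)"
| "nstep P (Suc n) s t = (\<Sum>u\<in>UNIV. nstep P n s u * P u t)"

definition irreducible_chain :: "('s::finite \<Rightarrow> 's \<Rightarrow> real) \<Rightarrow> bool" where
  "irreducible_chain P \<longleftrightarrow> (\<forall>s t. \<exists>n. nstep P n s t > 0)"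

definition aperiodic_chain :: "('s::finite \<Rightarrow> 's \<Rightarrow> real) \<Rightarrow> bool" where
  "aperiodic_chain P \<longleftrightarrow> (\<forall>s. Gcd {n. n > 0 \<and> nstep P n s s > 0} = (1::nat))"

definition ergodic_chain :: "('s::finite \<Rightarrow> 's \<Rightarrow> real) \<Rightarrow> bool" where
  "ergodic_chain P \<longleftrightarrow> stochastic P \<and> irreducible_chain P \<and> aperiodic_chain P"

definition stationary_distribution :: "('s::finite \<Rightarrow> 's \<Rightarrow> real) \<Rightarrow> ('s \<Rightarrow> real) \<Rightarrow> bool" where
  "stationary_distribution P \<pi> \<longleftrightarrow> (\<forall>s. \<pi> s \<ge> 0) \<and> (\<Sum>s\<in>UNIV. \<pi> s) = 1
     \<and> (\<forall>t. (\<Sum>s\<in>UNIV. \<pi> s * P s t) = \<pi> t)"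

definition diag_mat :: "('s::finite \<Rightarrow> real) \<Rightarrow> real^'s^'s" where
  "diag_mat d = (\<chi> i j. if i = j then d i else 0)"

definition ode_solution :: "('a::real_normed_vector \<Rightarrow> 'a) \<Rightarrow> (real \<Rightarrow> 'a) \<Rightarrow> bool" where
  "ode_solution f w \<longleftrightarrow> (\<forall>t\<ge>0. (w has_vector_derivative f (w t)) (at t within {0..}))"

definition equilibrium :: "('a::real_normed_vector \<Rightarrow> 'a) \<Rightarrow> 'a \<Rightarrow> bool" where
  "equilibrium f x \<longleftrightarrow> f x = 0"

definition lyapunov_stable :: "('a::real_normed_vector \<Rightarrow> 'a) \<Rightarrow> 'a \<Rightarrow> bool" where
  "lyapunov_stable f x \<longleftrightarrow> (\<forall>\<epsilon>>0. \<exists>\<delta>>0. \<forall>w. ode_solution f w \<longrightarrow> norm (w 0 - x) < \<delta>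
       \<longrightarrow> (\<forall>t\<ge>0. norm (w t - x) < \<epsilon>))"

definition globally_attractive :: "('a::real_normed_vector \<Rightarrow> 'a) \<Rightarrow> 'a \<Rightarrow> bool" where
  "globally_attractive f x \<longleftrightarrow> (\<forall>w. ode_solution f w \<longrightarrow> (w \<longlongrightarrow> x) at_top)"

definition globally_asymptotically_stable_equilibrium :: "('a::real_normed_vector \<Rightarrow> 'a) \<Rightarrow> 'a \<Rightarrow> bool" where
  "globally_asymptotically_stable_equilibrium f x \<longleftrightarrow>
     equilibrium f x \<and> lyapunov_stable f x \<and> globally_attractive f x"

definition nmc_h :: "('s::finite \<Rightarrow> real) \<Rightarrow> ('s \<Rightarrow> real^'n) \<Rightarrow> real^'s \<Rightarrow> real^'n \<Rightarrow> real^'n" where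
  "nmc_h \<pi> \<phi> V w = (\<Sum>s\<in>UNIV. (\<pi> s * ((\<phi> s \<bullet> w - V $ s) / (norm (\<phi> s))\<^sup>2)) *\<^sub>R \<phi> s)"

end

theory Submission imports Defs "HOL-Real_Asymp.Real_Asymp" begin

lemma nstep_nonneg: "stochastic P \<Longrightarrow> nstep P n s t \<ge> 0"
  by (induction n arbitrary: t) (auto simp: stochastic_def intro!: sum_nonneg)

lemma nstep_stat:
  assumes "stationary_distribution P \<pi>"
  shows "(\<Sum>s\<in>UNIV. \<pi> s * nstep P n s t) = \<pi> t"
proof (induction n arbitrary: t)
  case 0
  then show ?case by (simp add: if_distrib[of "\<lambda>c. _ * c"] cong: if_cong)
next
  case (Suc n)
  have "(\<Sum>s\<in>UNIV. \<pi> s * nstep P (Suc n) s t) = (\<Sum>s\<in>UNIV. \<Sum>u\<in>UNIV. \<pi> s * nstep P n s u * P u t)"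
    by (simp add: sum_distrib_left mult.assoc)
  also have "\<dots> = (\<Sum>u\<in>UNIV. \<Sum>s\<in>UNIV. \<pi> s * nstep P n s u * P u t)"
    by (rule sum.swap)
  also have "\<dots> = (\<Sum>u\<in>UNIV. \<pi> u * P u t)"
    by (simp add: sum_distrib_right[symmetric] Suc)
  also have "\<dots> = \<pi> t" using assms by (simp add: stationary_distribution_def)
  finally show ?case .
qed

lemma pi_pos:
  fixes P :: "'s::finite \<Rightarrow> 's \<Rightarrow> real"
  assumes erg: "ergodic_chain P" and stat: "stationary_distribution P \<pi>"
  shows "\<pi> t > 0"
proof -
  have nn: "\<forall>s. \<pi> s \<ge> 0" and one: "(\<Sum>s\<in>UNIV. \<pi> s) = 1"
    using stat by (auto simp: stationary_distribution_def)
  obtain s0 where s0: "\<pi> s0 > 0"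
  proof (rule ccontr)
    assume "\<not> thesis"
    then have "\<forall>s. \<pi> s = 0" using nn that by (metis antisym not_less)
    then show False using one by simp
  qed
  obtain n where n: "nstep P n s0 t > 0"
    using erg by (auto simp: ergodic_chain_def irreducible_chain_def)
  have st: "stochastic P" using erg by (simp add: ergodic_chain_def)
  have "\<pi> s0 * nstep P n s0 t \<le> (\<Sum>s\<in>UNIV. \<pi> s * nstep P n s t)"
    by (rule member_le_sum) (use nn nstep_nonneg[OF st] in auto)
  then show ?thesis using nstep_stat[OF stat, of n t] s0 n
    by (smt (verit) mult_pos_pos)
qed

lemma posdef_bound:
  fixes A :: "real^'n^'n"
  assumes "\<forall>x. x \<noteq> 0 \<longrightarrow> 0 < x \<bullet> (A *v x)"
  shows "\<exists>l>0. \<forall>x. l * (norm x)\<^sup>2 \<le> x \<bullet> (A *v x)"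
proof -
  have cont: "continuous_on (sphere 0 1) (\<lambda>x. x \<bullet> (A *v x))"
    by (intro continuous_intros linear_continuous_on matrix_vector_mul_linear)
  have ne: "sphere (0::real^'n) 1 \<noteq> {}"
    using norm_axis_1[of undefined] by (metis empty_iff mem_sphere_0)
  obtain x0 where x0: "x0 \<in> sphere 0 1" and min: "\<forall>y\<in>sphere 0 1. x0 \<bullet> (A *v x0) \<le> y \<bullet> (A *v y)"
    using continuous_attains_inf[OF compact_sphere ne cont] by blast
  have x0nz: "x0 \<noteq> 0" using x0 by auto
  define l where "l = x0 \<bullet> (A *v x0)"
  have lpos: "l > 0" using assms x0nz by (simp add: l_def)
  have "l * (norm x)\<^sup>2 \<le> x \<bullet> (A *v x)" for x
  proof (cases "x = 0")
    case True then show ?thesis by simp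
  next
    case False
    define u where "u = (1 / norm x) *\<^sub>R x"
    have u: "u \<in> sphere 0 1" using False by (simp add: u_def)
    have xu: "x = norm x *\<^sub>R u" using False by (simp add: u_def)
    have "x \<bullet> (A *v x) = (norm x)\<^sup>2 * (u \<bullet> (A *v u))"
      by (subst (1 2) xu) (simp add: matrix_vector_mult_scaleR power2_eq_square)
    moreover have "l \<le> u \<bullet> (A *v u)" using min u by (simp add: l_def)
    ultimately show ?thesis by (metis mult.commute mult_right_mono zero_le_power2)
  qed
  then show ?thesis using lpos by blast
qed

lemma ode_decay:
  fixes A :: "real^'n^'n" and w :: "real \<Rightarrow> real^'n"
  assumes l: "l > 0" and lb: "\<forall>x. l * (norm x)\<^sup>2 \<le> x \<bullet> (A *v x)"
    and sol: "ode_solution (\<lambda>w. - (A *v w - b)) w" and eq: "A *v wM = b"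
    and t: "t \<ge> 0"
  shows "(norm (w t - wM))\<^sup>2 \<le> exp (- (2 * l * t)) * (norm (w 0 - wM))\<^sup>2"
proof -
  define e where "e = (\<lambda>t. w t - wM)"
  define g where "g = (\<lambda>t. exp (2 * l * t) * (e t \<bullet> e t))"
  have der: "(w has_vector_derivative - (A *v e s)) (at s within {0..})" if "s \<ge> 0" for s
  proof -
    have "- (A *v w s - b) = - (A *v e s)" by (simp add: e_def matrix_vector_mult_diff_distrib eq)
    moreover have "(w has_vector_derivative - (A *v w s - b)) (at s within {0..})"
      using sol that by (simp add: ode_solution_def)
    ultimately show ?thesis by simp
  qed
  have cont: "continuous_on {0..t} g"
  proof -
    have "continuous_on {0..} w"
      using der has_vector_derivative_continuous continuous_on_eq_continuous_within by fastforce
    then have "continuous_on {0..t} w" by (rule continuous_on_subset) auto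
    then show ?thesis unfolding g_def e_def by (intro continuous_intros)
  qed
  have "g t \<le> g 0"
  proof (rule DERIV_nonpos_imp_decreasing_open[OF t _ cont])
    fix s assume s: "0 < s" "s < t"
    have ds: "(w has_vector_derivative - (A *v e s)) (at s)"
    proof -
      have "(w has_vector_derivative - (A *v e s)) (at s within {0<..})"
        using der[of s] s by (rule_tac has_vector_derivative_within_subset) auto
      then show ?thesis using has_vector_derivative_within_open[of s "{0<..}"] s by auto
    qed
    then have de: "(e has_derivative (\<lambda>h. h *\<^sub>R - (A *v e s))) (at s)"
      unfolding e_def has_vector_derivative_def by (auto intro!: derivative_eq_intros)
    have "((\<lambda>t. e t \<bullet> e t) has_derivative (\<lambda>h. e s \<bullet> (h *\<^sub>R - (A *v e s)) + (h *\<^sub>R - (A *v e s)) \<bullet> e s)) (at s)"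
      by (rule has_derivative_inner[OF de de])
    then have di: "((\<lambda>t. e t \<bullet> e t) has_real_derivative (- 2 * (e s \<bullet> (A *v e s)))) (at s)"
      unfolding has_field_derivative_def
      by (rule has_derivative_eq_rhs) (auto simp: fun_eq_iff inner_commute algebra_simps)
    have "(g has_real_derivative (2 * l * exp (2 * l * s) * (e s \<bullet> e s) + exp (2 * l * s) * (- 2 * (e s \<bullet> (A *v e s))))) (at s)"
      unfolding g_def by (auto intro!: derivative_eq_intros di)
    moreover have "2 * l * exp (2 * l * s) * (e s \<bullet> e s) + exp (2 * l * s) * (- 2 * (e s \<bullet> (A *v e s))) \<le> 0"
    proof -
      have "l * (e s \<bullet> e s) \<le> e s \<bullet> (A *v e s)" using lb[rule_format, of "e s"] by (simp add: power2_norm_eq_inner)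
      then have "exp (2 * l * s) * (l * (e s \<bullet> e s)) \<le> exp (2 * l * s) * (e s \<bullet> (A *v e s))"
        by (rule mult_left_mono) simp
      then show ?thesis by (simp add: algebra_simps)
    qed
    ultimately show "\<exists>y. (g has_real_derivative y) (at s) \<and> y \<le> 0" by blast
  qed
  then have "exp (2 * l * t) * (norm (e t))\<^sup>2 \<le> (norm (e 0))\<^sup>2"
    by (simp add: g_def power2_norm_eq_inner)
  then have "exp (- (2 * l * t)) * (exp (2 * l * t) * (norm (e t))\<^sup>2) \<le> exp (- (2 * l * t)) * (norm (e 0))\<^sup>2"
    by (rule mult_left_mono) simp
  then show ?thesis by (simp add: e_def exp_minus field_simps)
qed

lemma diag_mv: "diag_mat d *v x = (\<chi> s. d s * x $ s)"
proof -
  have "\<And>i. (\<Sum>j\<in>UNIV. (if i = j then d i else 0) * x $ j) = d i * x $ i"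
    by (simp add: if_distrib[of "\<lambda>c. c * _"] sum.delta cong: if_cong)
  then show ?thesis by (simp add: diag_mat_def matrix_vector_mult_def vec_eq_iff)
qed
lemma Phi_mv: assumes "\<forall>s. row s (Phi::real^'n^'s) = \<phi> s" shows "Phi *v w = (\<chi> s. \<phi> s \<bullet> w)"
  using assms by (simp add: matrix_vector_mult_def vec_eq_iff inner_vec_def row_def mult.commute)
lemma PhiT_mv: assumes "\<forall>s. row s (Phi::real^'n^'s) = \<phi> s" shows "y v* Phi = (\<Sum>s\<in>UNIV. (y $ s) *\<^sub>R \<phi> s)"
  using assms by (simp add: vector_matrix_mult_def vec_eq_iff row_def mult.commute)

theorem proposition5:
  fixes P :: "'s::finite \<Rightarrow> 's \<Rightarrow> real"
    and \<pi> :: "'s \<Rightarrow> real"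
    and \<phi> :: "'s \<Rightarrow> real^'n::finite"
    and V :: "real^'s"
    and \<Phi> :: "real^'n^'s"
  assumes ergodic: "ergodic_chain P"
    and stat: "stationary_distribution P \<pi>"
    and feat_nz: "\<forall>s. \<phi> s \<noteq> 0"
    and Phi_rows: "\<forall>s. row s \<Phi> = \<phi> s"
    and full_rank: "rank \<Phi> = CARD('n)"
  shows "let N = diag_mat (\<lambda>s. 1 / norm (\<phi> s));
             D = diag_mat \<pi>;
             wM = (matrix_inv (transpose \<Phi> ** N ** D ** N ** \<Phi>) ** transpose \<Phi> ** N ** D ** N) *v V;
             f = (\<lambda>w. - nmc_h \<pi> \<phi> V w)
         in globally_asymptotically_stable_equilibrium f wM
            \<and> (\<forall>x. globally_asymptotically_stable_equilibrium f x \<longrightarrow> x = wM)"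
proof -
  define N where "N = diag_mat (\<lambda>s. 1 / norm (\<phi> s))"
  define D where "D = diag_mat \<pi>"
  define A where "A = transpose \<Phi> ** N ** D ** N ** \<Phi>"
  define B where "B = transpose \<Phi> ** N ** D ** N"
  define b where "b = B *v V"
  define wM where "wM = (matrix_inv A ** B) *v V"
  define c where "c = (\<lambda>s. \<pi> s / (norm (\<phi> s))\<^sup>2)"
  have cpos: "c s > 0" for s using pi_pos[OF ergodic stat] feat_nz by (simp add: c_def)
  have Av: "A *v w = (\<Sum>s\<in>UNIV. (c s * (\<phi> s \<bullet> w)) *\<^sub>R \<phi> s)" for w
  proof -
    have "A *v w = transpose \<Phi> *v (N *v (D *v (N *v (\<Phi> *v w))))"
      by (simp add: A_def matrix_vector_mul_assoc matrix_mul_assoc)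
    also have "\<dots> = (\<Sum>s\<in>UNIV. (c s * (\<phi> s \<bullet> w)) *\<^sub>R \<phi> s)"
      by (simp add: PhiT_mv[OF Phi_rows] Phi_mv[OF Phi_rows] diag_mv N_def D_def c_def power2_eq_square)
    finally show ?thesis .
  qed
  have bv: "b = (\<Sum>s\<in>UNIV. (c s * V $ s) *\<^sub>R \<phi> s)"
  proof -
    have "b = transpose \<Phi> *v (N *v (D *v (N *v V)))"
      by (simp add: b_def B_def matrix_vector_mul_assoc matrix_mul_assoc)
    then show ?thesis
    by (simp add: PhiT_mv[OF Phi_rows] diag_mv N_def D_def c_def power2_eq_square)
  qed
  have h: "nmc_h \<pi> \<phi> V w = A *v w - b" for w
    unfolding nmc_h_def Av bv sum_subtractf[symmetric]
    by (rule sum.cong) (auto simp: c_def diff_divide_distrib algebra_simps)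
  have inj: "\<Phi> *v x = 0 \<Longrightarrow> x = 0" for x
    using full_rank unfolding full_rank_injective inj_on_def
    by (metis UNIV_I matrix_vector_mult_0_right)
  have q: "x \<bullet> (A *v x) = (\<Sum>s\<in>UNIV. c s * (\<phi> s \<bullet> x)\<^sup>2)" for x
    by (simp add: Av inner_sum_right power2_eq_square inner_commute mult.assoc)
  have qpos: "\<forall>x. x \<noteq> 0 \<longrightarrow> 0 < x \<bullet> (A *v x)"
  proof (intro allI impI)
    fix x :: "real^'n" assume "x \<noteq> 0"
    then have "\<Phi> *v x \<noteq> 0" using inj by blast
    then obtain s where s: "\<phi> s \<bullet> x \<noteq> 0"
      by (auto simp: Phi_mv[OF Phi_rows] vec_eq_iff)
    have "c s * (\<phi> s \<bullet> x)\<^sup>2 \<le> (\<Sum>s\<in>UNIV. c s * (\<phi> s \<bullet> x)\<^sup>2)"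
      by (rule member_le_sum) (auto intro!: mult_nonneg_nonneg less_imp_le[OF cpos])
    moreover have "c s * (\<phi> s \<bullet> x)\<^sup>2 > 0" using s cpos by simp
    ultimately show "0 < x \<bullet> (A *v x)" by (simp add: q)
  qed
  have Ainj: "A *v x = 0 \<Longrightarrow> x = 0" for x using qpos by force
  have "inj ((*v) A)"
    unfolding inj_on_def
    by (metis Ainj eq_iff_diff_eq_0 matrix_vector_mult_diff_distrib)
  then have "invertible A"
    using invertible_left_inverse matrix_left_invertible_injective by blast
  then have "A ** matrix_inv A = mat 1"
    unfolding invertible_def matrix_inv_def by (rule someI_ex[where P="\<lambda>A'. A ** A' = mat 1 \<and> A' ** A = mat 1", THEN conjunct1])
  then have AwM: "A *v wM = b"
  proof -
    assume AA: "A ** matrix_inv A = mat 1"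
    have "A *v wM = (A ** matrix_inv A) *v (B *v V)"
      by (simp add: wM_def matrix_vector_mul_assoc matrix_mul_assoc)
    then show ?thesis by (simp add: AA b_def)
  qed
  obtain l where l: "l > 0" and lb: "\<forall>x. l * (norm x)\<^sup>2 \<le> x \<bullet> (A *v x)"
    using posdef_bound[OF qpos] by blast
  define f where "f = (\<lambda>w. - nmc_h \<pi> \<phi> V w)"
  have f: "f = (\<lambda>w. - (A *v w - b))" by (simp add: f_def h)
  have decay: "(norm (w t - wM))\<^sup>2 \<le> exp (- (2 * l * t)) * (norm (w 0 - wM))\<^sup>2"
    if "ode_solution f w" "t \<ge> 0" for w t
    using ode_decay[OF l lb _ AwM] that f by blast
  have eqm: "equilibrium f wM" by (simp add: equilibrium_def f AwM)
  have stab: "lyapunov_stable f wM"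
    unfolding lyapunov_stable_def
  proof (intro allI impI)
    fix \<epsilon> :: real assume e: "\<epsilon> > 0"
    have key: "norm (w t - wM) < \<epsilon>"
      if sol: "ode_solution f w" and n0: "norm (w 0 - wM) < \<epsilon>" and t: "t \<ge> 0" for w t
    proof -
      have "0 \<le> 2 * l * t" using l t by simp
      then have e1: "exp (- (2 * l * t)) \<le> 1" by (simp only: exp_le_one_iff neg_le_0_iff_le)
      have "(norm (w t - wM))\<^sup>2 \<le> exp (- (2 * l * t)) * (norm (w 0 - wM))\<^sup>2" by (rule decay[OF sol t])
      also have "\<dots> \<le> 1 * (norm (w 0 - wM))\<^sup>2"
        by (rule mult_right_mono[OF e1 zero_le_power2])
      also have "\<dots> = (norm (w 0 - wM))\<^sup>2" by (rule mult_1_left)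
      finally have "norm (w t - wM) \<le> norm (w 0 - wM)"
        by (rule power2_le_imp_le[OF _ norm_ge_zero])
      then show "norm (w t - wM) < \<epsilon>" using n0 by linarith
    qed
    show "\<exists>\<delta>>0. \<forall>w. ode_solution f w \<longrightarrow> norm (w 0 - wM) < \<delta> \<longrightarrow> (\<forall>t\<ge>0. norm (w t - wM) < \<epsilon>)"
    proof (intro exI[of _ \<epsilon>] conjI allI impI)
      show "\<epsilon> > 0" by (rule e)
    next
      fix w t assume "ode_solution f w" "norm (w 0 - wM) < \<epsilon>" "(t::real) \<ge> 0"
      then show "norm (w t - wM) < \<epsilon>" by (rule key)
    qed
  qed
  have attr: "globally_attractive f wM"
    unfolding globally_attractive_def
  proof (intro allI impI)
    fix w assume sol: "ode_solution f w"
    have bound: "norm (w t - wM) \<le> exp (- (l * t)) * norm (w 0 - wM)" if t: "t \<ge> 0" for t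
    proof -
      have ee: "exp (- (2 * l * t)) = (exp (- (l * t)))\<^sup>2"
        by (simp add: power2_eq_square exp_add[symmetric])
      have "(norm (w t - wM))\<^sup>2 \<le> (exp (- (l * t)) * norm (w 0 - wM))\<^sup>2"
        using decay[OF sol t] unfolding ee power_mult_distrib .
      then show ?thesis by (rule power2_le_imp_le) simp
    qed
    have "((\<lambda>t. exp (- (l * t)) * norm (w 0 - wM)) \<longlongrightarrow> 0) at_top"
      using l by real_asymp
    moreover have "eventually (\<lambda>t. norm (w t - wM) \<le> exp (- (l * t)) * norm (w 0 - wM)) at_top"
      by (rule eventually_at_top_linorderI[of 0]) (rule bound)
    ultimately have "((\<lambda>t. w t - wM) \<longlongrightarrow> 0) at_top"
      by (rule Lim_null_comparison[rotated])
    then show "(w \<longlongrightarrow> wM) at_top" by (simp add: Lim_null[of w])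
  qed
  have gas: "globally_asymptotically_stable_equilibrium f wM"
    using eqm stab attr by (simp add: globally_asymptotically_stable_equilibrium_def)
  have uniq: "x = wM" if "globally_asymptotically_stable_equilibrium f x" for x
  proof -
    have "A *v x = b" using that by (simp add: globally_asymptotically_stable_equilibrium_def equilibrium_def f)
    then have "A *v (x - wM) = 0" by (simp add: matrix_vector_mult_diff_distrib AwM)
    then show ?thesis using Ainj[of "x - wM"] by simp
  qed
  have wM_eq: "(matrix_inv A ** transpose \<Phi> ** N ** D ** N) *v V = wM"
    by (simp add: wM_def B_def matrix_mul_assoc)
  show ?thesis
    unfolding Let_def N_def[symmetric] D_def[symmetric] A_def[symmetric] wM_eq f_def[symmetric]
    using gas uniq by blast
qed

end
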